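(* Let $h$ be a binary function symbol interpreted as associative and idempotent, let $a,b$ be distinct free constants, and let $x$ be a variable. Let $\mathcal{W}(x,\{a,b\})$ be the set of terms of the form $h(x,s_1,\ldots,s_n,x)$ with $n\ge 0$ and each $s_i\in\{x,a,b\}$. Then every $t\in\mathcal{W}(x,\{a,b\})$ is an $AI$-generalization of $h(a,b)$ and $h(b,a)$, i.e. $\mathcal{W}(x,\{a,b\})\subseteq \mathcal{G}_{AI}(h(a,b),h(b,a))$.
   Context: Terms are built from a countable set of variables and a set of function symbols with fixed arities; substitutions map variables to terms, are the identity on all but finitely many variables, and are extended homomorphically to terms (written postfix, $t\sigma$). $AI$ denotes the equational theory generated by $h(x,h(y,z)) = h(h(x,y),z)$ and $h(x,x)=x$ (all other symbols free), and $s\approx_{AI} t$ means $s=t$ holds in every model of these axioms. Because $h$ is associative, $h(u_1,\ldots,u_m)$ for $m\ge2$ denotes the flattened $h$-product of $u_1,\ldots,u_m$. A term $r$ is an $AI$-generalization of terms $s$ and $t$ if there exist substitutions $\sigma,\tau$ with $r\sigma\approx_{AI} s$ and $r\tau\approx_{AI} t$; $\mathcal{G}_{AI}(s,t)$ is the set of all such $r$. *)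

theory Defs
  imports Main
begin

datatype ('f, 'v) trm = Var 'v | Fun 'f "('f, 'v) trm list"

fun wf_trm :: "('f \<Rightarrow> nat) \<Rightarrow> ('f, 'v) trm \<Rightarrow> bool" where
  "wf_trm ar (Var x) = True"
| "wf_trm ar (Fun f ts) = (length ts = ar f \<and> (\<forall>t \<in> set ts. wf_trm ar t))"

fun subst_apply :: "('f, 'v) trm \<Rightarrow> ('v \<Rightarrow> ('f, 'v) trm) \<Rightarrow> ('f, 'v) trm" where
  "subst_apply (Var x) \<sigma> = \<sigma> x"
| "subst_apply (Fun f ts) \<sigma> = Fun f (map (\<lambda>t. subst_apply t \<sigma>) ts)"

definition is_subst :: "('f \<Rightarrow> nat) \<Rightarrow> ('v \<Rightarrow> ('f, 'v) trm) \<Rightarrow> bool" where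
  "is_subst ar \<sigma> \<longleftrightarrow> finite {x. \<sigma> x \<noteq> Var x} \<and> (\<forall>x. wf_trm ar (\<sigma> x))"

inductive ai_eq :: "'f \<Rightarrow> ('f, 'v) trm \<Rightarrow> ('f, 'v) trm \<Rightarrow> bool" for h :: 'f where
  assoc: "ai_eq h (Fun h [s, Fun h [t, u]]) (Fun h [Fun h [s, t], u])"
| idem: "ai_eq h (Fun h [s, s]) s"
| refl: "ai_eq h t t"
| sym: "ai_eq h s t \<Longrightarrow> ai_eq h t s"
| trans: "ai_eq h s t \<Longrightarrow> ai_eq h t u \<Longrightarrow> ai_eq h s u"
| cong: "list_all2 (ai_eq h) ss ts \<Longrightarrow> ai_eq h (Fun f ss) (Fun f ts)"

definition gen_AI :: "('f \<Rightarrow> nat) \<Rightarrow> 'f \<Rightarrow> ('f, 'v) trm \<Rightarrow> ('f, 'v) trm \<Rightarrow> ('f, 'v) trm set" where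
  "gen_AI ar h s t = {r. wf_trm ar r \<and> (\<exists>\<sigma> \<tau>. is_subst ar \<sigma> \<and> is_subst ar \<tau> \<and>
      ai_eq h (subst_apply r \<sigma>) s \<and> ai_eq h (subst_apply r \<tau>) t)}"

text \<open>Flattened h-product h(u_1,...,u_m) (right-nested; for m = 1 just u_1).\<close>
fun hprod :: "'f \<Rightarrow> ('f, 'v) trm list \<Rightarrow> ('f, 'v) trm" where
  "hprod h [] = undefined"
| "hprod h [u] = u"
| "hprod h (u # us) = Fun h [u, hprod h us]"

definition W_set :: "'f \<Rightarrow> 'v \<Rightarrow> 'f \<Rightarrow> 'f \<Rightarrow> ('f, 'v) trm set" where
  "W_set h x a b = {hprod h ([Var x] @ ss @ [Var x]) | ss.
      set ss \<subseteq> {Var x, Fun a [], Fun b []}}"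

end

theory Submission
  imports Defs
begin

declare ai_eq.trans[trans]

lemma ai_cong2: "ai_eq h s s' \<Longrightarrow> ai_eq h t t' \<Longrightarrow> ai_eq h (Fun f [s,t]) (Fun f [s',t'])"
  by (rule ai_eq.cong) simp

lemma hprod_Cons: "us \<noteq> [] \<Longrightarrow> hprod h (u # us) = Fun h [u, hprod h us]"
  by (cases us) auto

lemma hprod_append: "xs \<noteq> [] \<Longrightarrow> ys \<noteq> [] \<Longrightarrow>
  ai_eq h (Fun h [hprod h xs, hprod h ys]) (hprod h (xs @ ys))"
proof (induction xs)
  case Nil thus ?case by simp
next
  case (Cons x xs)
  show ?case
  proof (cases "xs = []")
    case True thus ?thesis using Cons by (simp add: hprod_Cons ai_eq.refl)
  next
    case False
    have "ai_eq h (Fun h [hprod h (x#xs), hprod h ys]) (Fun h [Fun h [x, hprod h xs], hprod h ys])"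
      using False by (simp add: hprod_Cons ai_eq.refl)
    also have "ai_eq h \<dots> (Fun h [x, Fun h [hprod h xs, hprod h ys]])"
      by (rule ai_eq.sym, rule ai_eq.assoc)
    also have "ai_eq h \<dots> (Fun h [x, hprod h (xs @ ys)])"
      using Cons False by (intro ai_cong2 ai_eq.refl) auto
    also have "\<dots> = hprod h ((x#xs) @ ys)" using False by (simp add: hprod_Cons)
    finally show ?thesis .
  qed
qed

lemma hprod_ctx_suf: "ai_eq h (hprod h u) (hprod h u') \<Longrightarrow> u \<noteq> [] \<Longrightarrow> u' \<noteq> [] \<Longrightarrow>
  ai_eq h (hprod h (u @ q)) (hprod h (u' @ q))"
proof (cases "q = []")
  case True thus "ai_eq h (hprod h u) (hprod h u') \<Longrightarrow> ?thesis" by simp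
next
  case False
  assume a: "ai_eq h (hprod h u) (hprod h u')" "u \<noteq> []" "u' \<noteq> []"
  have "ai_eq h (hprod h (u @ q)) (Fun h [hprod h u, hprod h q])"
    using hprod_append[of u q h] a False by (blast intro: ai_eq.sym)
  also have "ai_eq h \<dots> (Fun h [hprod h u', hprod h q])" using a by (intro ai_cong2 ai_eq.refl)
  also have "ai_eq h \<dots> (hprod h (u' @ q))" using hprod_append[of u' q h] a False by blast
  finally show ?thesis .
qed

lemma hprod_ctx_pre: "ai_eq h (hprod h u) (hprod h u') \<Longrightarrow> u \<noteq> [] \<Longrightarrow> u' \<noteq> [] \<Longrightarrow>
  ai_eq h (hprod h (p @ u)) (hprod h (p @ u'))"
proof (cases "p = []")
  case True thus "ai_eq h (hprod h u) (hprod h u') \<Longrightarrow> ?thesis" by simp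
next
  case False
  assume a: "ai_eq h (hprod h u) (hprod h u')" "u \<noteq> []" "u' \<noteq> []"
  have "ai_eq h (hprod h (p @ u)) (Fun h [hprod h p, hprod h u])"
    using hprod_append[of p u h] a False by (blast intro: ai_eq.sym)
  also have "ai_eq h \<dots> (Fun h [hprod h p, hprod h u'])" using a by (intro ai_cong2 ai_eq.refl)
  also have "ai_eq h \<dots> (hprod h (p @ u'))" using hprod_append[of p u' h] a False by blast
  finally show ?thesis .
qed

lemma hprod_ctx: "ai_eq h (hprod h u) (hprod h u') \<Longrightarrow> u \<noteq> [] \<Longrightarrow> u' \<noteq> [] \<Longrightarrow>
  ai_eq h (hprod h (p @ u @ q)) (hprod h (p @ u' @ q))"
  by (rule hprod_ctx_pre, rule hprod_ctx_suf) auto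

lemma hprod_idem: "u \<noteq> [] \<Longrightarrow> ai_eq h (hprod h (u @ u)) (hprod h u)"
  using hprod_append[of u u h] by (blast intro: ai_eq.sym ai_eq.trans ai_eq.idem)

lemma ABAB: "ai_eq h (hprod h (p @ [A,B,A,B] @ q)) (hprod h (p @ [A,B] @ q))"
  by (rule hprod_ctx) (use hprod_idem[of "[A,B]" h] in auto)

lemma AA: "ai_eq h (hprod h (p @ [A,A] @ q)) (hprod h (p @ [A] @ q))"
  by (rule hprod_ctx) (auto intro: ai_eq.idem)

lemma band: "set w \<subseteq> {A,B} \<Longrightarrow> ai_eq h (hprod h ([A,B] @ w @ [A,B])) (Fun h [A,B])"
proof (induction "length w" arbitrary: w rule: less_induct)
  case less
  show ?case
  proof (cases w rule: rev_cases)
    case Nil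
    thus ?thesis using ABAB[of h "[]" A B "[]"] by simp
  next
    case (snoc w1 c)
    show ?thesis
    proof (cases "c = A")
      case True
      have "ai_eq h (hprod h ([A,B] @ w @ [A,B])) (hprod h (([A,B] @ w1) @ [A] @ [B]))"
        using AA[of h "[A,B] @ w1" A "[B]"] True snoc by simp
      also have "ai_eq h \<dots> (Fun h [A,B])" using less snoc by simp
      finally show ?thesis .
    next
      case cA: False
      hence cB: "c = B" using less snoc by auto
      show ?thesis
      proof (cases w1)
        case Nil
        thus ?thesis using less(1)[of "[]"] AA[of h "[A]" B "[A,B]"] snoc cB
          by (auto intro: ai_eq.trans)
      next
        case (Cons d v)
        show ?thesis
        proof (cases "d = B")
          case True
          have "ai_eq h (hprod h ([A,B] @ w @ [A,B])) (hprod h ([A] @ [B] @ (v @ [c,A,B])))"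
            using AA[of h "[A]" B "v @ [c,A,B]"] True snoc Cons by simp
          also have "ai_eq h \<dots> (Fun h [A,B])" using less(1)[of "v@[c]"] less(2) snoc Cons by simp
          finally show ?thesis .
        next
          case False
          hence dA: "d = A" using less snoc Cons by auto
          show ?thesis
          proof (cases v rule: rev_cases)
            case Nil
            have "ai_eq h (hprod h ([A,B] @ w @ [A,B])) (hprod h ([] @ [A,B] @ [A,B]))"
              using ABAB[of h "[]" A B "[A,B]"] Nil snoc Cons dA cB by simp
            also have "ai_eq h \<dots> (Fun h [A,B])" using less(1)[of "[]"] snoc Cons by simp
            finally show ?thesis .
          next
            case (snoc v1 e)
            show ?thesis
            proof (cases "e = B")
              case True
              have "ai_eq h (hprod h ([A,B] @ w @ [A,B])) (hprod h (([A,B,A] @ v1) @ [B] @ [A,B]))"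
                using AA[of h "[A,B,A] @ v1" B "[A,B]"] True snoc \<open>w = w1 @ [c]\<close> Cons dA cB by simp
              also have "ai_eq h \<dots> (Fun h [A,B])" using less(1)[of "A # v1 @ [B]"] less(2)
                  snoc \<open>w = w1 @ [c]\<close> Cons dA cB by simp
              finally show ?thesis .
            next
              case eB: False
              hence eA: "e = A" using less snoc \<open>w = w1 @ [c]\<close> Cons by auto
              show ?thesis
              proof (cases v1)
                case Nil
                have "ai_eq h (hprod h ([A,B] @ w @ [A,B])) (hprod h ([A,B] @ [A,A] @ [B,A,B]))"
                  using Nil snoc \<open>w = w1 @ [c]\<close> Cons dA cB eA by (simp add: ai_eq.refl)
                also have "ai_eq h \<dots> (hprod h ([A,B] @ [A] @ [B,A,B]))" by (rule AA)
                also have "ai_eq h \<dots> (Fun h [A,B])" using less(1)[of "[A,B]"] less(2)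
                    snoc \<open>w = w1 @ [c]\<close> Cons dA cB by simp
                finally show ?thesis .
              next
                case (Cons f v2)
                show ?thesis
                proof (cases "f = A")
                  case True
                  have "ai_eq h (hprod h ([A,B] @ w @ [A,B])) (hprod h ([A,B] @ [A,A] @ (v2 @ [A,B,A,B])))"
                    using Cons snoc \<open>w = w1 @ [c]\<close> \<open>w1 = d # v\<close> dA cB eA True by (simp add: ai_eq.refl)
                  also have "ai_eq h \<dots> (hprod h ([A,B] @ [A] @ (v2 @ [A,B,A,B])))" by (rule AA)
                  also have "ai_eq h \<dots> (Fun h [A,B])" using less(1)[of "A # v2 @ [A,B]"] less(2)
                      Cons snoc \<open>w = w1 @ [c]\<close> \<open>w1 = d # v\<close> dA cB eA by simp
                  finally show ?thesis .
                next
                  case False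
                  hence fB: "f = B" using less Cons snoc \<open>w = w1 @ [c]\<close> \<open>w1 = d # v\<close> by auto
                  have "ai_eq h (hprod h ([A,B] @ w @ [A,B])) (hprod h ([] @ [A,B,A,B] @ (v2 @ [A,B,A,B])))"
                    using Cons snoc \<open>w = w1 @ [c]\<close> \<open>w1 = d # v\<close> dA cB eA fB by (simp add: ai_eq.refl)
                  also have "ai_eq h \<dots> (hprod h ([] @ [A,B] @ (v2 @ [A,B,A,B])))" by (rule ABAB)
                  also have "ai_eq h \<dots> (hprod h (([A,B] @ v2) @ [A,B,A,B] @ []))"
                    by (simp add: ai_eq.refl)
                  also have "ai_eq h \<dots> (hprod h (([A,B] @ v2) @ [A,B] @ []))" by (rule ABAB)
                  also have "ai_eq h \<dots> (Fun h [A,B])" using less(1)[of v2] less(2)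
                      Cons snoc \<open>w = w1 @ [c]\<close> \<open>w1 = d # v\<close> by simp
                  finally show ?thesis .
                qed
              qed
            qed
          qed
        qed
      qed
    qed
  qed
qed


lemma hprod_flat: "Ls \<noteq> [] \<Longrightarrow> \<forall>l\<in>set Ls. l \<noteq> [] \<Longrightarrow>
  ai_eq h (hprod h (map (hprod h) Ls)) (hprod h (concat Ls))"
proof (induction Ls)
  case Nil thus ?case by simp
next
  case (Cons l Ls)
  show ?case
  proof (cases "Ls = []")
    case True thus ?thesis by (simp add: ai_eq.refl)
  next
    case False
    have ne: "concat Ls \<noteq> []" using False Cons.prems by (cases Ls) auto
    have "hprod h (map (hprod h) (l # Ls)) = Fun h [hprod h l, hprod h (map (hprod h) Ls)]"
      using False by (simp add: hprod_Cons)
    also have "ai_eq h \<dots> (Fun h [hprod h l, hprod h (concat Ls)])"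
      using Cons False by (intro ai_cong2 ai_eq.refl) auto
    also have "ai_eq h \<dots> (hprod h (l @ concat Ls))"
      using hprod_append[of l "concat Ls" h] ne Cons.prems by simp
    finally show ?thesis by simp
  qed
qed

lemma subst_hprod: "ts \<noteq> [] \<Longrightarrow> subst_apply (hprod h ts) \<sigma> = hprod h (map (\<lambda>t. subst_apply t \<sigma>) ts)"
  by (induction h ts rule: hprod.induct) auto

lemma side:
  assumes ss: "set ss \<subseteq> {Var x, Fun a [], Fun c []}"
  shows "ai_eq h (subst_apply (hprod h ([Var x] @ ss @ [Var x])) (Var(x := Fun h [Fun a [], Fun c []])))
           (Fun h [Fun a [], Fun c []])"
proof -
  define A :: "('a,'b) trm" where "A = Fun a []"
  define B :: "('a,'b) trm" where "B = Fun c []"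
  define \<sigma> where "\<sigma> = Var(x := Fun h [A, B])"
  define g where "g s = (if s = Var x then [A,B] else [s])" for s
  have ssAB: "set ss \<subseteq> {Var x, A, B}" using ss by (simp add: A_def B_def)
  have e: "subst_apply s \<sigma> = hprod h (g s)" if "s \<in> {Var x, A, B}" for s
    using that by (auto simp: \<sigma>_def g_def A_def B_def)
  have "subst_apply (hprod h ([Var x] @ ss @ [Var x])) \<sigma>
      = hprod h (map (\<lambda>t. subst_apply t \<sigma>) ([Var x] @ ss @ [Var x]))"
    by (simp add: subst_hprod)
  also have "map (\<lambda>t. subst_apply t \<sigma>) ([Var x] @ ss @ [Var x]) = map (hprod h) (map g ([Var x] @ ss @ [Var x]))"
    unfolding map_map by (rule map_cong[OF HOL.refl], simp only: comp_def, rule e) (use ssAB in auto)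
  also have "ai_eq h (hprod h \<dots>) (hprod h (concat (map g ([Var x] @ ss @ [Var x]))))"
    by (rule hprod_flat) (auto simp: g_def)
  also have "concat (map g ([Var x] @ ss @ [Var x])) = [A,B] @ concat (map g ss) @ [A,B]"
    by (simp add: g_def)
  also have "ai_eq h (hprod h \<dots>) (Fun h [A,B])"
    by (rule band) (use ssAB in \<open>auto simp: g_def split: if_splits\<close>)
  finally show ?thesis unfolding \<sigma>_def A_def B_def .  
qed

lemma wf_hprod: "ts \<noteq> [] \<Longrightarrow> ar h = 2 \<Longrightarrow> \<forall>t\<in>set ts. wf_trm ar t \<Longrightarrow> wf_trm ar (hprod h ts)"
  by (induction h ts rule: hprod.induct) auto

theorem corollary1:
  fixes ar :: "'f \<Rightarrow> nat" and h a b :: 'f and x :: 'v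
  assumes "ar h = 2" and "ar a = 0" and "ar b = 0"
    and "a \<noteq> b" and "h \<noteq> a" and "h \<noteq> b"
  shows "W_set h x a b \<subseteq>
    gen_AI ar h (Fun h [Fun a [], Fun b []]) (Fun h [Fun b [], Fun a []])"
proof
  fix r assume "r \<in> W_set h x a b"
  then obtain ss where r: "r = hprod h ([Var x] @ ss @ [Var x])"
    and ss: "set ss \<subseteq> {Var x, Fun a [], Fun b []}" unfolding W_set_def by blast
  have wf: "wf_trm ar r" unfolding r
    by (rule wf_hprod) (use ss assms in auto)
  have s1: "is_subst ar (Var(x := Fun h [Fun a [], Fun b []]))"
    unfolding is_subst_def using assms
    by (auto intro: finite_subset[of _ "{x}"])
  have s2: "is_subst ar (Var(x := Fun h [Fun b [], Fun a []]))"
    unfolding is_subst_def using assms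
    by (auto intro: finite_subset[of _ "{x}"])
  have ss2: "set ss \<subseteq> {Var x, Fun b [], Fun a []}" using ss by auto
  show "r \<in> gen_AI ar h (Fun h [Fun a [], Fun b []]) (Fun h [Fun b [], Fun a []])"
    unfolding gen_AI_def using wf s1 s2 side[OF ss, of h] side[OF ss2, of h] r by blast
qed

end
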